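(* Let $G$ be a group and $a\in G$. The following are equivalent: (1) $a$ has infinite order; (2) there exist disjoint subsets $E_1,E_2$ of $G$ such that $aE_1\subseteq E_1$ and $aE_2\cap E_1\neq\emptyset$.
   Context: Here $aE=\{ax:x\in E\}$ denotes left translation in $G$. *)

theory Defs
  imports "HOL-Algebra.Algebra"
begin

end

theory Submission
  imports Defs
begin

lemma (in group) pow_stable:
  assumes "a \<in> carrier G" "E \<subseteq> carrier G" "a <# E \<subseteq> E" "x \<in> E"
  shows "a [^] (k::nat) \<otimes> x \<in> E"
proof (induction k)
  case 0
  then show ?case using assms by auto
next
  case (Suc k)
  have xc: "x \<in> carrier G" using assms by auto
  have "a [^] Suc k \<otimes> x = a \<otimes> (a [^] k \<otimes> x)"
  proof -
    have "a [^] Suc k = a \<otimes> a [^] k" using assms(1) by (rule nat_pow_Suc2)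
    then show ?thesis using assms(1) xc by (simp only:) (rule m_assoc, auto)
  qed
  moreover have "a \<otimes> (a [^] k \<otimes> x) \<in> a <# E"
    using Suc unfolding l_coset_def by blast
  ultimately show ?case using assms(3) by auto
qed
theorem mainTheorem12:
  fixes G (structure) and a
  assumes "group G" and "a \<in> carrier G"
  shows "group.ord G a = 0 \<longleftrightarrow>
    (\<exists>E1 E2. E1 \<subseteq> carrier G \<and> E2 \<subseteq> carrier G \<and> E1 \<inter> E2 = {} \<and>
       a <# E1 \<subseteq> E1 \<and> (a <# E2) \<inter> E1 \<noteq> {})"
proof
  interpret group G by fact
  assume o: "ord a = 0"
  define E1 where "E1 = {a [^] (n::nat) | n. n \<noteq> 0}"
  have c1: "E1 \<subseteq> carrier G" using assms(2) unfolding E1_def by auto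
  have d: "E1 \<inter> {\<one>} = {}" using o ord_eq_0[OF assms(2)] unfolding E1_def by auto
  have s: "a <# E1 \<subseteq> E1"
  proof
    fix y assume "y \<in> a <# E1"
    then obtain x where "x \<in> E1" "y = a \<otimes> x" unfolding l_coset_def by blast
    then obtain n :: nat where "n \<noteq> 0" "y = a \<otimes> a [^] n" unfolding E1_def by blast
    then have "y = a [^] Suc n" using nat_pow_Suc2[OF assms(2), of n] by simp
    then show "y \<in> E1" unfolding E1_def by blast
  qed
  have "a \<in> (a <# {\<one>}) \<inter> E1"
    using assms(2) unfolding l_coset_def E1_def by (auto intro!: exI[of _ 1])
  then show "\<exists>E1 E2. E1 \<subseteq> carrier G \<and> E2 \<subseteq> carrier G \<and> E1 \<inter> E2 = {} \<and>
       a <# E1 \<subseteq> E1 \<and> (a <# E2) \<inter> E1 \<noteq> {}"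
    using c1 d s by (intro exI[of _ E1] exI[of _ "{\<one>}"] conjI) auto
next
  interpret group G by fact
  assume "\<exists>E1 E2. E1 \<subseteq> carrier G \<and> E2 \<subseteq> carrier G \<and> E1 \<inter> E2 = {} \<and>
       a <# E1 \<subseteq> E1 \<and> (a <# E2) \<inter> E1 \<noteq> {}"
  then obtain E1 E2 where h0: "E1 \<subseteq> carrier G" "E2 \<subseteq> carrier G" "E1 \<inter> E2 = {}"
    "a <# E1 \<subseteq> E1" "(a <# E2) \<inter> E1 \<noteq> {}" by (elim exE conjE) (rule that)
  have "\<exists>y. y \<in> (a <# E2) \<inter> E1" using h0(5) by blast
  then obtain y where y: "y \<in> a <# E2" "y \<in> E1" by (elim exE IntE)
  then obtain e2 where "e2 \<in> E2" "y = a \<otimes> e2" unfolding l_coset_def by (elim UN_E) auto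
  with y have "e2 \<in> E2" "a \<otimes> e2 \<in> E1" by simp_all
  note h = h0(1-4) this
  show "ord a = 0"
  proof (rule ccontr)
    assume n: "ord a \<noteq> 0"
    have e2c: "e2 \<in> carrier G" using h(2,5) by (rule subsetD)
    have "a [^] (ord a - 1) \<otimes> (a \<otimes> e2) \<in> E1"
      using pow_stable[OF assms(2) h(1) h(4) h(6)] .
    moreover have "a [^] (ord a - 1) \<otimes> (a \<otimes> e2) = e2"
    proof -
      have "a [^] (ord a - 1) \<otimes> (a \<otimes> e2) = (a [^] (ord a - 1) \<otimes> a) \<otimes> e2"
        using assms(2) e2c by (simp add: m_assoc)
      also have "a [^] (ord a - 1) \<otimes> a = a [^] Suc (ord a - 1)"
        by (rule nat_pow_Suc[symmetric])
      also have "Suc (ord a - 1) = ord a" using n by simp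
      finally show ?thesis using assms(2) e2c by simp
    qed
    ultimately have "e2 \<in> E1 \<inter> E2" using h(5) by simp
    then show False using h(3) by simp
  qed
qed

end
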